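(* Let $1\le m\le k-1$, $K=\{1,\dots,k\}$, $T\subseteq K$ with $|T|=m$, and let $\mathcal{V}=\{\bm v_1,\dots,\bm v_{m-1}\}$ be $m-1$ distinct points of $PG(k-1,q)$ with $\mathrm{supp}(\bm v_i)\cap T=\emptyset$ for all $i$. Then the set $M=X^T\cup Y^T_{\mathcal V}\cup Z^T$ is a $(k-m)$-block over $\mathbb{F}_q$; that is, every $m$-dimensional linear subspace of $\mathbb{F}_q^k$ contains (a representing vector of) at least one point of $M$.
   Context: Points of $PG(k-1,q)$ are one-dimensional subspaces of $\mathbb{F}_q^k$, identified with any nonzero representing vector; the support $\mathrm{supp}(\bm x)=\{i:x_i\neq0\}$ of a point is well defined. $\bm e_i$ denotes the $i$-th standard unit vector of $\mathbb{F}_q^k$. Define $X^T=\{\bm x\in PG(k-1,q): \mathrm{supp}(\bm x)\cap T=\emptyset\}$; $Y^T_{\mathcal V}=\{\bm x\in PG(k-1,q): |\mathrm{supp}(\bm x)\cap T|=1\}$ minus all points represented by $\bm v_i+\lambda\bm e_j$ with $\bm v_i\in\mathcal V$, $j\in T$, $\lambda\in\mathbb{F}_q\setminus\{0\}$; $Z^T=\{\bm x\in PG(k-1,q): \mathrm{supp}(\bm x)\text{ is a 2-element subset of }T\}$. For $1\le r\le k-1$, a set $M$ of points of $PG(k-1,q)$ is an $r$-block if every $(k-r)$-dimensional linear subspace of $\mathbb{F}_q^k$ contains at least one point of $M$. *)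

theory Defs
  imports Main
begin

text \<open>Vectors of F_q^k are modelled as functions nat => 'a vanishing outside
  the coordinate set {1..k}; 'a is a finite field (F_q).  Points of PG(k-1,q)
  are represented by nonzero vectors; all sets of points below are unions of
  full projective classes (closed under nonzero scaling).\<close>

definition vecs :: "nat \<Rightarrow> (nat \<Rightarrow> 'a::zero) set" where
  "vecs k = {x. \<forall>i. i \<notin> {1..k} \<longrightarrow> x i = 0}"

definition supp :: "(nat \<Rightarrow> 'a::zero) \<Rightarrow> nat set" where
  "supp x = {i. x i \<noteq> 0}"

definition unitv :: "nat \<Rightarrow> nat \<Rightarrow> 'a::{zero,one}" where
  "unitv j = (\<lambda>i. if i = j then 1 else 0)"

definition smult_v :: "'a::times \<Rightarrow> (nat \<Rightarrow> 'a) \<Rightarrow> nat \<Rightarrow> 'a" where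
  "smult_v c x = (\<lambda>i. c * x i)"

definition add_v :: "(nat \<Rightarrow> 'a::plus) \<Rightarrow> (nat \<Rightarrow> 'a) \<Rightarrow> nat \<Rightarrow> 'a" where
  "add_v x y = (\<lambda>i. x i + y i)"

definition same_point :: "(nat \<Rightarrow> 'a::field) \<Rightarrow> (nat \<Rightarrow> 'a) \<Rightarrow> bool" where
  "same_point x y \<longleftrightarrow> (\<exists>c. c \<noteq> 0 \<and> x = smult_v c y)"

definition lin_comb :: "nat \<Rightarrow> (nat \<Rightarrow> 'a::field) \<Rightarrow> (nat \<Rightarrow> nat \<Rightarrow> 'a) \<Rightarrow> nat \<Rightarrow> 'a" where
  "lin_comb d c w = (\<lambda>i. \<Sum>j<d. c j * w j i)"

definition lin_indep :: "nat \<Rightarrow> (nat \<Rightarrow> nat \<Rightarrow> 'a::field) \<Rightarrow> bool" where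
  "lin_indep d w \<longleftrightarrow> (\<forall>c. lin_comb d c w = (\<lambda>_. 0) \<longrightarrow> (\<forall>j<d. c j = 0))"

definition subspace_of_dim :: "nat \<Rightarrow> nat \<Rightarrow> (nat \<Rightarrow> 'a::field) set \<Rightarrow> bool" where
  "subspace_of_dim k d W \<longleftrightarrow>
     (\<exists>w. (\<forall>j<d. w j \<in> vecs k) \<and> lin_indep d w \<and> W = {lin_comb d c w | c. True})"

definition is_block :: "nat \<Rightarrow> nat \<Rightarrow> (nat \<Rightarrow> 'a::field) set \<Rightarrow> bool" where
  "is_block k r M \<longleftrightarrow>
     (\<forall>W. subspace_of_dim k (k - r) W \<longrightarrow> (\<exists>x\<in>W. x \<noteq> (\<lambda>_. 0) \<and> x \<in> M))"

definition Xset :: "nat \<Rightarrow> nat set \<Rightarrow> (nat \<Rightarrow> 'a::field) set" where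
  "Xset k T = {x \<in> vecs k. x \<noteq> (\<lambda>_. 0) \<and> supp x \<inter> T = {}}"

definition Yset :: "nat \<Rightarrow> nat set \<Rightarrow> (nat \<Rightarrow> 'a::field) set \<Rightarrow> (nat \<Rightarrow> 'a) set" where
  "Yset k T V = {x \<in> vecs k. x \<noteq> (\<lambda>_. 0) \<and> card (supp x \<inter> T) = 1 \<and>
     \<not> (\<exists>v\<in>V. \<exists>j\<in>T. \<exists>c. c \<noteq> 0 \<and> same_point x (add_v v (smult_v c (unitv j))))}"

definition Zset :: "nat \<Rightarrow> nat set \<Rightarrow> (nat \<Rightarrow> 'a::field) set" where
  "Zset k T = {x \<in> vecs k. card (supp x) = 2 \<and> supp x \<subseteq> T}"

end

theory Submission
  imports Defs "HOL-Library.FuncSet"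
begin


lemma zo_bij:
  fixes A :: "nat set"
  shows "bij_betw (\<lambda>f. restrict f A) {c::nat\<Rightarrow>'a::zero. \<forall>j. j\<notin>A \<longrightarrow> c j = 0} (PiE A (\<lambda>_. UNIV))"
  apply (rule bij_betw_byWitness[where f'="\<lambda>h j. if j\<in>A then h j else 0"])
  apply (auto simp: fun_eq_iff restrict_def PiE_def extensional_def)
  done

lemma zo_card:
  fixes A :: "nat set"
  assumes "finite A"
  shows "finite {c::nat\<Rightarrow>'a::{finite,zero}. \<forall>j. j\<notin>A \<longrightarrow> c j = 0}"
    "card {c::nat\<Rightarrow>'a::{finite,zero}. \<forall>j. j\<notin>A \<longrightarrow> c j = 0} = card (UNIV::'a set) ^ card A"
proof -
  have b: "bij_betw (\<lambda>f. restrict f A) {c::nat\<Rightarrow>'a::{finite,zero}. \<forall>j. j\<notin>A \<longrightarrow> c j = 0} (PiE A (\<lambda>_. UNIV))"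
    by (rule zo_bij)
  have f: "finite (PiE A (\<lambda>_. UNIV::'a set))" using assms by (simp add: finite_PiE)
  show "finite {c::nat\<Rightarrow>'a::{finite,zero}. \<forall>j. j\<notin>A \<longrightarrow> c j = 0}"
    using bij_betw_finite[OF b] f by simp
  show "card {c::nat\<Rightarrow>'a::{finite,zero}. \<forall>j. j\<notin>A \<longrightarrow> c j = 0} = card (UNIV::'a set) ^ card A"
    using bij_betw_same_card[OF b] assms by (simp add: card_PiE)
qed

lemma lin_comb_lin:
  "a * lin_comb d c w i + b * lin_comb d c' w i = lin_comb d (\<lambda>j. a * c j + b * c' j) w i"
  by (simp add: lin_comb_def sum_distrib_left sum.distrib algebra_simps)

lemma lin_comb_vecs: "(\<forall>j<d. w j \<in> vecs k) \<Longrightarrow> lin_comb d c w \<in> vecs k"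
  by (simp add: vecs_def lin_comb_def)



theorem mainTheorem16:
  fixes k m :: nat and T :: "nat set" and V :: "(nat \<Rightarrow> 'a::{finite,field}) set"
  assumes "1 \<le> m" and "m \<le> k - 1"
    and "T \<subseteq> {1..k}" and "card T = m"
    and "V \<subseteq> vecs k" and "\<forall>v\<in>V. v \<noteq> (\<lambda>_. 0)"
    and "card V = m - 1"
    and "\<forall>v\<in>V. \<forall>w\<in>V. v \<noteq> w \<longrightarrow> \<not> same_point v w"
    and "\<forall>v\<in>V. supp v \<inter> T = {}"
  shows "is_block k (k - m) (Xset k T \<union> Yset k T V \<union> Zset k T)"
proof (unfold is_block_def, intro allI impI)
  fix W :: "(nat \<Rightarrow> 'a) set"
  assume "subspace_of_dim k (k - (k - m)) W"
  moreover have "k - (k - m) = m" using assms(1,2) by simp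
  ultimately have "subspace_of_dim k m W" by simp
  then obtain w where wv: "\<forall>j<m. w j \<in> vecs k" and li: "lin_indep m w"
    and Wdef: "W = {lin_comb m c w | c. True}"
    unfolding subspace_of_dim_def by blast
  define D where "D = {c::nat\<Rightarrow>'a. \<forall>j. j\<notin>{..<m} \<longrightarrow> c j = 0}"
  define E where "E = {c::nat\<Rightarrow>'a. \<forall>j. j\<notin>T \<longrightarrow> c j = 0}"
  have finT: "finite T" using assms(3) finite_subset by blast
  have Dfin: "finite D" and Dcard: "card D = card (UNIV::'a set)^m"
    using zo_card[of "{..<m}"] D_def by auto
  have Efin: "finite E" and Ecard: "card E = card (UNIV::'a set)^m"
    using zo_card[OF finT] E_def assms(4) by auto
  have WD: "W = (\<lambda>c. lin_comb m c w) ` D"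
  proof
    show "W \<subseteq> (\<lambda>c. lin_comb m c w) ` D"
    proof
      fix x assume "x \<in> W"
      then obtain c where x: "x = lin_comb m c w" using Wdef by blast
      define c' where "c' = (\<lambda>j. if j < m then c j else 0)"
      have "c' \<in> D" unfolding D_def c'_def by auto
      moreover have "lin_comb m c' w = x" unfolding x lin_comb_def c'_def by auto
      ultimately show "x \<in> (\<lambda>c. lin_comb m c w) ` D" by blast
    qed
    show "(\<lambda>c. lin_comb m c w) ` D \<subseteq> W" using Wdef by blast
  qed
  have injL: "inj_on (\<lambda>c. lin_comb m c w) D"
  proof (rule inj_onI)
    fix c1 c2 assume c1: "c1 \<in> D" and c2: "c2 \<in> D" and eq: "lin_comb m c1 w = lin_comb m c2 w"
    have "lin_comb m (\<lambda>j. 1 * c1 j + (-1) * c2 j) w = (\<lambda>_. 0)"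
    proof
      fix i
      have "lin_comb m (\<lambda>j. 1 * c1 j + (-1) * c2 j) w i = 1 * lin_comb m c1 w i + (-1) * lin_comb m c2 w i"
        by (rule lin_comb_lin[symmetric])
      then show "lin_comb m (\<lambda>j. 1 * c1 j + (-1) * c2 j) w i = 0" using eq by simp
    qed
    moreover have "lin_comb m (\<lambda>j. 1 * c1 j + (-1) * c2 j) w = (\<lambda>_. 0) \<longrightarrow> (\<forall>j<m. 1 * c1 j + (-1) * c2 j = 0)"
      using li unfolding lin_indep_def by (rule spec)
    ultimately have h: "\<forall>j<m. 1 * c1 j + (-1) * c2 j = 0" by (rule mp[rotated])
    show "c1 = c2"
    proof
      fix j
      show "c1 j = c2 j"
      proof (cases "j < m")
        case True
        then show ?thesis using h by simp
      next
        case False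
        then show ?thesis using c1 c2 unfolding D_def by simp
      qed
    qed
  qed
  have Wcard: "card W = card (UNIV::'a set)^m"
    unfolding WD using card_image[OF injL] Dcard by simp
  have Wlin: "\<And>x y a b. x \<in> W \<Longrightarrow> y \<in> W \<Longrightarrow> (\<lambda>i. a * x i + b * y i) \<in> W"
  proof -
    fix x y a b assume "x \<in> W" "y \<in> W"
    then obtain c c' where xy: "x = lin_comb m c w" "y = lin_comb m c' w" using Wdef by blast
    have "(\<lambda>i. a * x i + b * y i) = lin_comb m (\<lambda>j. a * c j + b * c' j) w"
      unfolding xy using lin_comb_lin by (auto simp: fun_eq_iff)
    then show "(\<lambda>i. a * x i + b * y i) \<in> W" using Wdef by blast
  qed
  have Wvecs: "W \<subseteq> vecs k" using Wdef lin_comb_vecs[OF wv] by blast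
  define P where "P = (\<lambda>x::nat\<Rightarrow>'a. \<lambda>i. if i \<in> T then x i else 0)"
  show "\<exists>x\<in>W. x \<noteq> (\<lambda>_. 0) \<and> x \<in> Xset k T \<union> Yset k T V \<union> Zset k T"
  proof (cases "inj_on P W")
    case False
    then obtain x y where xy: "x \<in> W" "y \<in> W" "x \<noteq> y" "P x = P y" unfolding inj_on_def by blast
    define z where "z = (\<lambda>i. 1 * x i + (-1) * y i)"
    have zW: "z \<in> W" using Wlin xy z_def by blast
    have z0: "z \<noteq> (\<lambda>_. 0)" using xy(3) by (auto simp: z_def fun_eq_iff)
    have "supp z \<inter> T = {}"
    proof -
      { fix i assume "i \<in> T" then have "x i = y i" using fun_cong[OF xy(4), of i] P_def by simp
        hence "z i = 0" by (simp add: z_def) }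
      then show ?thesis by (auto simp: supp_def)
    qed
    then have "z \<in> Xset k T" using zW Wvecs z0 by (auto simp: Xset_def)
    then show ?thesis using zW z0 by blast
  next
    case True
    have "P ` W \<subseteq> E" by (auto simp: P_def E_def)
    moreover have "card (P ` W) = card E" using card_image[OF True] Wcard Ecard by simp
    ultimately have PWE: "P ` W = E" by (intro card_subset_eq[OF Efin]) simp_all
    have ex: "\<forall>j\<in>T. \<exists>x\<in>W. P x = unitv j"
    proof
      fix j assume "j \<in> T"
      then have "unitv j \<in> E" by (auto simp: E_def unitv_def)
      then show "\<exists>x\<in>W. P x = unitv j" using PWE by (metis image_iff)
    qed
    then have "\<exists>u. \<forall>j\<in>T. u j \<in> W \<and> P (u j) = unitv j" using ex by (intro bchoice) blast
    then obtain u where u0: "\<forall>j\<in>T. u j \<in> W \<and> P (u j) = unitv j" by blast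
    have u: "\<And>j. j \<in> T \<Longrightarrow> u j \<in> W \<and> P (u j) = unitv j" using u0 by blast
    show ?thesis
    proof (cases "\<exists>j\<in>T. u j \<in> Yset k T V")
      case True
      then obtain j where j: "j \<in> T" "u j \<in> Yset k T V" by blast
      then show ?thesis using u[OF j(1)] by (auto simp: Yset_def)
    next
      case False
      have key: "\<forall>j\<in>T. \<exists>v d c. v \<in> V \<and> d \<noteq> 0 \<and> c \<noteq> 0 \<and> (\<forall>i. u j i = d * (v i + c * unitv j i))"
      proof
        fix j assume jT: "j \<in> T"
        have uW: "u j \<in> W" and Pu: "P (u j) = unitv j" using u[OF jT] by auto
        have uj: "\<And>i. i \<in> T \<Longrightarrow> u j i = unitv j i"
        proof -
          fix i assume iT: "i \<in> T"
          have "P (u j) i = unitv j i" using Pu by simp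
          then show "u j i = unitv j i" using iT by (simp add: P_def)
        qed
        have suppT: "supp (u j) \<inter> T = {j}" using uj jT by (auto simp: supp_def unitv_def split: if_splits)
        have nz: "u j \<noteq> (\<lambda>_. 0)" using uj[OF jT] by (auto simp: unitv_def fun_eq_iff intro!: exI[of _ j])
        have "u j \<notin> Yset k T V" using False jT by blast
        moreover have "u j \<in> vecs k" using uW Wvecs by blast
        moreover have "card (supp (u j) \<inter> T) = 1" using suppT by simp
        ultimately have "\<exists>v\<in>V. \<exists>j'\<in>T. \<exists>c. c \<noteq> 0 \<and> same_point (u j) (add_v v (smult_v c (unitv j')))"
          using nz unfolding Yset_def by blast
        then obtain v j' c where v: "v \<in> V" "j' \<in> T" "c \<noteq> 0" "same_point (u j) (add_v v (smult_v c (unitv j')))"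
          by blast
        then obtain d where d: "d \<noteq> 0" "u j = smult_v d (add_v v (smult_v c (unitv j')))"
          unfolding same_point_def by blast
        have vj: "v j = 0" using assms(9) v(1) jT by (auto simp: supp_def)
        have "u j j = 1" using uj[OF jT] by (simp add: unitv_def)
        then have "d * (v j + c * unitv j' j) = 1" using d(2) by (simp add: smult_v_def add_v_def)
        then have "j' = j" using vj by (auto simp: unitv_def split: if_splits)
        then show "\<exists>v d c. v \<in> V \<and> d \<noteq> 0 \<and> c \<noteq> 0 \<and> (\<forall>i. u j i = d * (v i + c * unitv j i))"
          using v d by (auto simp: smult_v_def add_v_def)
      qed
      then have "\<exists>f. \<forall>j\<in>T. \<exists>d c. f j \<in> V \<and> d \<noteq> 0 \<and> c \<noteq> 0 \<and> (\<forall>i. u j i = d * (f j i + c * unitv j i))"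
        by (rule bchoice)
      then obtain f where f1: "\<forall>j\<in>T. \<exists>d c. f j \<in> V \<and> d \<noteq> 0 \<and> c \<noteq> 0 \<and> (\<forall>i. u j i = d * (f j i + c * unitv j i))"
        by blast
      from f1 have "\<exists>dd. \<forall>j\<in>T. \<exists>c. f j \<in> V \<and> dd j \<noteq> 0 \<and> c \<noteq> 0 \<and> (\<forall>i. u j i = dd j * (f j i + c * unitv j i))"
        by (rule bchoice)
      then obtain dd where f2: "\<forall>j\<in>T. \<exists>c. f j \<in> V \<and> dd j \<noteq> 0 \<and> c \<noteq> 0 \<and> (\<forall>i. u j i = dd j * (f j i + c * unitv j i))"
        by blast
      from f2 have "\<exists>cc. \<forall>j\<in>T. f j \<in> V \<and> dd j \<noteq> 0 \<and> cc j \<noteq> 0 \<and> (\<forall>i. u j i = dd j * (f j i + cc j * unitv j i))"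
        by (rule bchoice)
      then obtain cc where f3: "\<forall>j\<in>T. f j \<in> V \<and> dd j \<noteq> 0 \<and> cc j \<noteq> 0 \<and> (\<forall>i. u j i = dd j * (f j i + cc j * unitv j i))"
        by blast
      have f: "\<And>j. j \<in> T \<Longrightarrow> f j \<in> V \<and> dd j \<noteq> 0 \<and> cc j \<noteq> 0 \<and> (\<forall>i. u j i = dd j * (f j i + cc j * unitv j i))"
        using f3 by blast
      have "\<not> inj_on f T"
      proof
        assume inj: "inj_on f T"
        have fTV: "f ` T \<subseteq> V" using f by blast
        have finV: "finite V" using assms(5) zo_card(1)[of "{1..k}"] finite_subset unfolding vecs_def by auto
        then have "card (f ` T) \<le> card V" using card_mono fTV by blast
        then show False using card_image[OF inj] assms(4,7,1) by simp
      qed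
      then obtain j1 j2 where jj: "j1 \<in> T" "j2 \<in> T" "j1 \<noteq> j2" "f j1 = f j2" unfolding inj_on_def by blast
      define z where "z = (\<lambda>i. inverse (dd j1) * u j1 i + (- inverse (dd j2)) * u j2 i)"
      have zW: "z \<in> W" unfolding z_def using Wlin[OF conjunct1[OF u[OF jj(1)]] conjunct1[OF u[OF jj(2)]]] by blast
      have e1: "\<And>i. inverse (dd j1) * u j1 i = f j1 i + cc j1 * unitv j1 i" using f[OF jj(1)] by simp
      have e2: "\<And>i. inverse (dd j2) * u j2 i = f j1 i + cc j2 * unitv j2 i" using f[OF jj(2)] jj(4) by simp
      have zi: "\<And>i. z i = cc j1 * unitv j1 i - cc j2 * unitv j2 i"
        unfolding z_def using e1 e2 by (simp add: algebra_simps)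
      have sz: "supp z = {j1, j2}" using zi jj f by (auto simp: supp_def unitv_def)
      have "card (supp z) = 2" using sz jj(3) by simp
      then have zZ: "z \<in> Zset k T" using zW Wvecs jj sz by (auto simp: Zset_def)
      have "z \<noteq> (\<lambda>_. 0)" using sz by (auto simp: supp_def)
      then show ?thesis using zW zZ by blast
    qed
  qed
qed

end
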